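(* Let $\mu$ be a conjugation-symmetric probability Borel measure on $\mathbb T$ with infinite support, $\Phi_i$ its monic orthogonal polynomials, $\varphi_i=\kappa_i\Phi_i$ its orthonormal polynomials ($\kappa_i>0$), $\Phi_i^*(z)=z^i\Phi_i(1/z)$, $\varphi_n^*(z)=z^n\varphi_n(1/z)$, $b_n=\varphi_n/\varphi_n^*$, $K_n(z,w)=\sum_{i=0}^{n-1}\varphi_i(z)\overline{\varphi_i(w)}$, and $h_n(z)=\frac{(1-z^2)b_n'(z)}{1-b_n^2(z)}$. For $|\beta|=1$ let $\Phi_n(z;\beta):=z\Phi_{n-1}(z)-\beta\Phi_{n-1}^*(z)$ be the $n$-th paraorthogonal polynomial, and let $\zeta_{1,n},\dots,\zeta_{n,n}\in\mathbb T$ be the zeros of $\Phi_n(z;1)$. Then $$h_n(z)=\frac{1-z^2}{2}\frac{F_n'(z)}{F_n(z)},$$ where $F_n$ is a trivial Carathéodory function given by $$F_n(z)=-\frac{\Phi_n(z;-1)}{\Phi_n(z;1)}=\int\frac{\zeta+z}{\zeta-z}\,d\sigma_n(\zeta),$$ and $\sigma_n$ is the probability measure $$\sigma_n=\sum_{k=1}^n\frac{|\varphi_{n-1}(\zeta_{k,n})|^2}{K_n(\zeta_{k,n},\zeta_{k,n})}\delta_{\zeta_{k,n}},$$ $\delta_\zeta$ denoting the unit point mass at $\zeta$.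
   Context: A trivial Carathéodory function is one of the form $\int\frac{\zeta+z}{\zeta-z}d\sigma(\zeta)$ with $\sigma$ a probability measure on $\mathbb T$ supported on finitely many points. *)

theory Defs
  imports "HOL-Probability.Probability" "HOL-Computational_Algebra.Polynomial"
begin

definition msupport :: "complex measure \<Rightarrow> complex set" where
  "msupport \<mu> = {z. \<forall>e>0. emeasure \<mu> (ball z e) > 0}"

definition is_monic_OP :: "complex measure \<Rightarrow> nat \<Rightarrow> complex poly \<Rightarrow> bool" where
  "is_monic_OP \<mu> n p \<longleftrightarrow> degree p = n \<and> lead_coeff p = 1 \<and>
     (\<forall>k<n. (LINT z|\<mu>. poly p z * cnj z ^ k) = 0)"

definition mOP :: "complex measure \<Rightarrow> nat \<Rightarrow> complex poly" where
  "mOP \<mu> n = (THE p. is_monic_OP \<mu> n p)"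

definition kappa :: "complex measure \<Rightarrow> nat \<Rightarrow> real" where
  "kappa \<mu> n = 1 / sqrt (LINT z|\<mu>. (cmod (poly (mOP \<mu> n) z))\<^sup>2)"

definition oOP :: "complex measure \<Rightarrow> nat \<Rightarrow> complex poly" where
  "oOP \<mu> n = smult (complex_of_real (kappa \<mu> n)) (mOP \<mu> n)"

text \<open>Reversed polynomial of order n: evaluates to z^n p(1/z) for z nonzero.\<close>
definition star_poly :: "nat \<Rightarrow> complex poly \<Rightarrow> complex poly" where
  "star_poly n p = (\<Sum>k\<le>n. monom (coeff p (n - k)) k)"

definition bfun :: "complex measure \<Rightarrow> nat \<Rightarrow> complex \<Rightarrow> complex" where
  "bfun \<mu> n z = poly (oOP \<mu> n) z / poly (star_poly n (oOP \<mu> n)) z"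

definition Kker :: "complex measure \<Rightarrow> nat \<Rightarrow> complex \<Rightarrow> complex \<Rightarrow> complex" where
  "Kker \<mu> n z w = (\<Sum>i<n. poly (oOP \<mu> i) z * cnj (poly (oOP \<mu> i) w))"

definition hfun :: "complex measure \<Rightarrow> nat \<Rightarrow> complex \<Rightarrow> complex" where
  "hfun \<mu> n z = (1 - z\<^sup>2) * deriv (bfun \<mu> n) z / (1 - (bfun \<mu> n z)\<^sup>2)"

definition POP :: "complex measure \<Rightarrow> nat \<Rightarrow> complex \<Rightarrow> complex poly" where
  "POP \<mu> n \<beta> = [:0, 1:] * mOP \<mu> (n - 1) - smult \<beta> (star_poly (n - 1) (mOP \<mu> (n - 1)))"

definition Ffun :: "complex measure \<Rightarrow> nat \<Rightarrow> complex \<Rightarrow> complex" where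
  "Ffun \<mu> n z = - poly (POP \<mu> n (-1)) z / poly (POP \<mu> n 1) z"

definition sigma_wt :: "complex measure \<Rightarrow> nat \<Rightarrow> complex \<Rightarrow> real" where
  "sigma_wt \<mu> n \<zeta> = (cmod (poly (oOP \<mu> (n - 1)) \<zeta>))\<^sup>2 / Re (Kker \<mu> n \<zeta> \<zeta>)"

end

theory Submission
  imports Defs "HOL-Computational_Algebra.Fundamental_Theorem_Algebra"
begin


lemma star_poly_coeff:
  "coeff (star_poly k p) j = (if j \<le> k then coeff p (k - j) else 0)"
  unfolding star_poly_def by (auto simp: coeff_sum coeff_monom)

lemma degree_star_poly: "degree (star_poly k p) \<le> k"
  by (rule degree_le) (auto simp: star_poly_coeff)

lemma star_poly_diff: "star_poly k (p - q) = star_poly k p - star_poly k q"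
  by (rule poly_eqI) (simp add: star_poly_coeff)

lemma star_poly_smult: "star_poly k (smult c p) = smult c (star_poly k p)"
  by (rule poly_eqI) (simp add: star_poly_coeff)

lemma star_poly_add: "star_poly k (p + q) = star_poly k p + star_poly k q"
  by (rule poly_eqI) (simp add: star_poly_coeff)

lemma star_poly_shift: "star_poly (Suc k) ([:0,1:] * p) = star_poly k p"
proof (rule poly_eqI)
  fix j
  have e: "[:0,1:] * p = pCons 0 p" by simp
  show "coeff (star_poly (Suc k) ([:0, 1:] * p)) j = coeff (star_poly k p) j"
    unfolding e star_poly_coeff
    by (cases "Suc k - j") (auto simp: Suc_diff_le)
qed

lemma star_poly_Suc:
  assumes "degree q \<le> k"
  shows "star_poly (Suc k) q = [:0,1:] * star_poly k q"
proof (rule poly_eqI)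
  fix j
  have e: "[:0,1:] * star_poly k q = pCons 0 (star_poly k q)" by simp
  show "coeff (star_poly (Suc k) q) j = coeff ([:0, 1:] * star_poly k q) j"
    unfolding e star_poly_coeff
    using assms by (cases j) (auto simp: star_poly_coeff coeff_eq_0)
qed

lemma star_poly_0: "coeff (star_poly k p) 0 = coeff p k"
  by (simp add: star_poly_coeff)

lemma poly_upto:
  fixes p :: "complex poly"
  assumes "degree p \<le> k"
  shows "poly p x = (\<Sum>i\<le>k. coeff p i * x ^ i)"
proof -
  have "poly p x = (\<Sum>i\<le>degree p. coeff p i * x ^ i)" by (rule poly_altdef)
  also have "\<dots> = (\<Sum>i\<le>k. coeff p i * x ^ i)"
    using assms by (intro sum.mono_neutral_left) (auto simp: coeff_eq_0)
  finally show ?thesis .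
qed

lemma poly_star:
  fixes z :: complex
  assumes "z \<noteq> 0" "degree p \<le> k"
  shows "poly (star_poly k p) z = z ^ k * poly p (1 / z)"
proof -
  have "poly (star_poly k p) z = (\<Sum>j\<le>k. coeff p (k - j) * z ^ j)"
    unfolding star_poly_def by (simp add: poly_sum poly_monom)
  also have "\<dots> = (\<Sum>i\<le>k. coeff p i * z ^ (k - i))"
    by (rule sum.reindex_bij_witness[of _ "\<lambda>i. k - i" "\<lambda>i. k - i"]) auto
  also have "\<dots> = z ^ k * (\<Sum>i\<le>k. coeff p i * (1/z) ^ i)"
    unfolding sum_distrib_left
    by (intro sum.cong refl) (use assms in \<open>auto simp: power_diff power_one_over\<close>)
  also have "\<dots> = z ^ k * poly p (1 / z)" using poly_upto[OF assms(2)] by simp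
  finally show ?thesis .
qed

definition rc :: "complex poly \<Rightarrow> bool" where
  "rc p \<longleftrightarrow> (\<forall>i. cnj (coeff p i) = coeff p i)"

lemma rc_poly_cnj: "rc p \<Longrightarrow> poly p (cnj z) = cnj (poly p z)"
  unfolding rc_def poly_altdef by simp

lemma rc_diff: "rc p \<Longrightarrow> rc q \<Longrightarrow> rc (p - q)" unfolding rc_def by simp
lemma rc_add: "rc p \<Longrightarrow> rc q \<Longrightarrow> rc (p + q)" unfolding rc_def by simp
lemma rc_smult: "rc p \<Longrightarrow> cnj c = c \<Longrightarrow> rc (smult c p)" unfolding rc_def by simp
lemma rc_shift: "rc p \<Longrightarrow> rc ([:0,1:] * p)"
proof -
  have e: "[:0,1:] * p = pCons 0 p" by simp
  assume "rc p" then show ?thesis unfolding e rc_def by (simp add: coeff_pCons split: nat.split)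
qed
lemma rc_star: "rc p \<Longrightarrow> rc (star_poly k p)" unfolding rc_def by (simp add: star_poly_coeff)
lemma rc_1: "rc 1" unfolding rc_def by (simp add: coeff_1)

lemma poly_star_circ:
  fixes z :: complex
  assumes "cmod z = 1" "degree p \<le> k" "rc p"
  shows "poly (star_poly k p) z = z ^ k * cnj (poly p z)"
proof -
  have "z \<noteq> 0" using assms by auto
  moreover have "z * cnj z = 1" using complex_norm_square[of z] assms by simp
  hence "1 / z = cnj z" using \<open>z \<noteq> 0\<close> by (simp add: field_simps)
  ultimately show ?thesis using poly_star[of z p k] assms rc_poly_cnj[of p z] by simp
qed

lemma star_star: "degree p \<le> k \<Longrightarrow> star_poly k (star_poly k p) = p"
  by (rule poly_eqI) (auto simp: star_poly_coeff coeff_eq_0)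

lemma CD_alg:
  fixes K X X' Y Y' c r \<kappa> \<kappa>' :: complex
  assumes "\<kappa> = \<kappa>' * (1 - r * r)" "K * (1 - c) = \<kappa> * (X * X' - Y * Y')"
  shows "(K + \<kappa>' * ((Y - r * X) * (Y' - r * X'))) * (1 - c) =
         \<kappa>' * ((X - r * Y) * (X' - r * Y') - c * ((Y - r * X) * (Y' - r * X')))"
  using assms by algebra

lemma lagrange:
  fixes p :: "complex poly" and Z :: "complex set"
  assumes fin: "finite Z" and deg: "degree p < card Z"
  shows "poly p z = (\<Sum>\<zeta>\<in>Z. poly p \<zeta> / (\<Prod>j\<in>Z-{\<zeta>}. (\<zeta> - j)) * (\<Prod>j\<in>Z-{\<zeta>}. (z - j)))"
proof -
  define c where "c \<zeta> = poly p \<zeta> / (\<Prod>j\<in>Z-{\<zeta>}. (\<zeta> - j))" for \<zeta>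
  define L where "L = (\<Sum>\<zeta>\<in>Z. smult (c \<zeta>) (\<Prod>j\<in>Z-{\<zeta>}. [:-j,1:]))"
  have pL: "poly L z = (\<Sum>\<zeta>\<in>Z. c \<zeta> * (\<Prod>j\<in>Z-{\<zeta>}. (z - j)))" for z
    unfolding L_def by (simp add: poly_sum poly_prod)
  have dL: "degree L \<le> card Z - 1"
    unfolding L_def
  proof (rule degree_sum_le[OF fin])
    fix \<zeta> assume "\<zeta> \<in> Z"
    have "degree (\<Prod>j\<in>Z-{\<zeta>}. [:-j,1:]) = (\<Sum>j\<in>Z-{\<zeta>}. degree [:-j,1::complex:])"
      by (rule degree_prod_sum_eq) auto
    also have "\<dots> = card Z - 1" using fin \<open>\<zeta> \<in> Z\<close> by simp
    finally show "degree (smult (c \<zeta>) (\<Prod>j\<in>Z-{\<zeta>}. [:-j,1:])) \<le> card Z - 1"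
      by (metis degree_smult_le le_trans)
  qed
  have vL: "poly L \<eta> = poly p \<eta>" if "\<eta> \<in> Z" for \<eta>
  proof -
    have "poly L \<eta> = c \<eta> * (\<Prod>j\<in>Z-{\<eta>}. (\<eta> - j)) + (\<Sum>\<zeta>\<in>Z-{\<eta>}. c \<zeta> * (\<Prod>j\<in>Z-{\<zeta>}. (\<eta> - j)))"
      unfolding pL using fin that by (subst sum.remove) auto
    also have "(\<Sum>\<zeta>\<in>Z-{\<eta>}. c \<zeta> * (\<Prod>j\<in>Z-{\<zeta>}. (\<eta> - j))) = 0"
      using fin that by (intro sum.neutral ballI mult_eq_0_iff[THEN iffD2] disjI2 prod_zero) auto
    also have "(\<Prod>j\<in>Z-{\<eta>}. (\<eta> - j)) \<noteq> 0" using fin by (subst prod_zero_iff) auto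
    hence "c \<eta> * (\<Prod>j\<in>Z-{\<eta>}. (\<eta> - j)) = poly p \<eta>" unfolding c_def by simp
    finally show ?thesis by simp
  qed
  have "p - L = 0"
  proof (rule ccontr)
    assume ne: "p - L \<noteq> 0"
    have "Z \<subseteq> {x. poly (p - L) x = 0}" using vL by auto
    hence "card Z \<le> card {x. poly (p - L) x = 0}"
      using poly_roots_finite[OF ne] by (rule card_mono[rotated])
    also have "\<dots> \<le> degree (p - L)" by (rule card_poly_roots_bound[OF ne])
    also have "\<dots> \<le> max (degree p) (degree L)" by (rule degree_diff_le_max)
    also have "\<dots> < card Z" using deg dL by auto
    finally show False by simp
  qed
  hence "p = L" by simp
  hence "poly p z = poly L z" by simp
  also have "\<dots> = (\<Sum>\<zeta>\<in>Z. poly p \<zeta> / (\<Prod>j\<in>Z-{\<zeta>}. (\<zeta> - j)) * (\<Prod>j\<in>Z-{\<zeta>}. (z - j)))"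
    unfolding pL c_def ..
  finally show ?thesis .
qed



fun Pc :: "complex measure \<Rightarrow> nat \<Rightarrow> complex poly" where
  "Pc \<mu> 0 = 1"
| "Pc \<mu> (Suc k) = [:0,1:] * Pc \<mu> k - smult ((LINT z|\<mu>. z * poly (Pc \<mu> k) z) /
      (LINT z|\<mu>. poly (star_poly k (Pc \<mu> k)) z)) (star_poly k (Pc \<mu> k))"

definition alph :: "complex measure \<Rightarrow> nat \<Rightarrow> complex" where
  "alph \<mu> k = (LINT z|\<mu>. z * poly (Pc \<mu> k) z) / (LINT z|\<mu>. poly (star_poly k (Pc \<mu> k)) z)"

lemma Pc_Suc': "Pc \<mu> (Suc k) = [:0,1:] * Pc \<mu> k - smult (alph \<mu> k) (star_poly k (Pc \<mu> k))"
  by (simp add: alph_def)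

declare Pc.simps(2)[simp del]

lemma circ_inv: "cmod (z::complex) = 1 \<Longrightarrow> z * cnj z = 1"
  using complex_norm_square[of z] by simp

lemma circ_pow: "cmod (z::complex) = 1 \<Longrightarrow> j \<le> k \<Longrightarrow> z ^ k * cnj z ^ j = z ^ (k - j)"
proof -
  assume a: "cmod z = 1" "j \<le> k"
  have "z ^ k * cnj z ^ j = z ^ (k - j) * (z * cnj z) ^ j"
    using a(2) by (simp add: power_mult_distrib power_add[symmetric] mult_ac)
  thus ?thesis using circ_inv[OF a(1)] by simp
qed

locale opuc =
  fixes \<mu> :: "complex measure"
  assumes prob: "prob_space \<mu>" and sets_eq: "sets \<mu> = sets borel"
    and circ: "AE z in \<mu>. z \<in> sphere 0 1"
    and sym: "distr \<mu> borel cnj = \<mu>"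
    and inf: "infinite (msupport \<mu>)"
begin

lemma fin: "finite_measure \<mu>" using prob by (simp add: prob_space_def)

lemma meas: "continuous_on UNIV f \<Longrightarrow> f \<in> borel_measurable \<mu>"
  using borel_measurable_continuous_onI measurable_cong_sets[OF sets_eq refl] by blast

lemma intg:
  fixes f :: "complex \<Rightarrow> 'b::{banach, second_countable_topology}"
  assumes "continuous_on UNIV f"
  shows "integrable \<mu> f"
proof -
  have "compact (f ` sphere 0 1)"
    by (rule compact_continuous_image) (use assms continuous_on_subset in auto)
  then obtain B where B: "\<forall>y\<in>f ` sphere 0 1. norm y \<le> B"
    using compact_imp_bounded bounded_pos by metis
  show ?thesis
  proof (rule finite_measure.integrable_const_bound[OF fin])
    show "f \<in> borel_measurable \<mu>" using meas assms .
    show "AE x in \<mu>. norm (f x) \<le> B"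
      using circ by eventually_elim (use B in auto)
  qed
qed

lemma cong_circ:
  fixes f g :: "complex \<Rightarrow> 'b::{banach, second_countable_topology}"
  assumes "continuous_on UNIV f" "continuous_on UNIV g" "\<And>z. cmod z = 1 \<Longrightarrow> f z = g z"
  shows "integral\<^sup>L \<mu> f = integral\<^sup>L \<mu> g"
  by (rule integral_cong_AE) (use meas assms circ in \<open>auto elim!: AE_mp\<close>)

lemma sym_int:
  fixes f :: "complex \<Rightarrow> 'b::{banach, second_countable_topology}"
  assumes "continuous_on UNIV f"
  shows "integral\<^sup>L \<mu> (\<lambda>z. f (cnj z)) = integral\<^sup>L \<mu> f"
proof -
  have "cnj \<in> measurable \<mu> borel"
    using meas[of cnj] by (auto intro!: continuous_intros)
  moreover have "f \<in> borel_measurable borel" using assms borel_measurable_continuous_onI by blast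
  ultimately have "integral\<^sup>L (distr \<mu> borel cnj) f = integral\<^sup>L \<mu> (\<lambda>z. f (cnj z))"
    by (rule integral_distr)
  thus ?thesis using sym by simp
qed

lemma norm_pos:
  fixes p :: "complex poly"
  assumes "p \<noteq> 0"
  shows "(LINT z|\<mu>. (cmod (poly p z))\<^sup>2) > 0"
proof -
  have ge: "(LINT z|\<mu>. (cmod (poly p z))\<^sup>2) \<ge> 0" by (rule integral_nonneg_AE) auto
  have ii: "integrable \<mu> (\<lambda>z. (cmod (poly p z))\<^sup>2)"
    by (rule intg) (auto intro!: continuous_intros)
  show ?thesis
  proof (rule ccontr)
    assume "\<not> ?thesis"
    with ge have "(LINT z|\<mu>. (cmod (poly p z))\<^sup>2) = 0" by linarith
    hence "AE z in \<mu>. (cmod (poly p z))\<^sup>2 = 0"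
      using integral_nonneg_eq_0_iff_AE[OF ii] by auto
    hence ae: "AE z in \<mu>. poly p z = 0" by simp
    let ?R = "{x. poly p x = 0}"
    have finR: "finite ?R" using poly_roots_finite[OF assms] .
    have "msupport \<mu> \<subseteq> ?R"
    proof
      fix x assume x: "x \<in> msupport \<mu>"
      show "x \<in> ?R"
      proof (rule ccontr)
        assume "x \<notin> ?R"
        have "open (- ?R)" using finR finite_imp_closed by blast
        then obtain e where e: "e > 0" "ball x e \<subseteq> - ?R"
          using \<open>x \<notin> ?R\<close> open_contains_ball by blast
        from ae obtain N where N: "{z \<in> space \<mu>. \<not> poly p z = 0} \<subseteq> N" "emeasure \<mu> N = 0" "N \<in> sets \<mu>"
          by (rule AE_E)
        have bs: "ball x e \<in> sets \<mu>" using sets_eq by simp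
        have "ball x e \<subseteq> N" using e N(1) sets.sets_into_space[OF bs] by auto
        hence "emeasure \<mu> (ball x e) \<le> emeasure \<mu> N"
          using N(3) by (intro emeasure_mono) auto
        hence "emeasure \<mu> (ball x e) = 0" using N(2) by auto
        with x e show False unfolding msupport_def by auto
      qed
    qed
    with finR inf show False using finite_subset by blast
  qed
qed


lemma expand:
  assumes "continuous_on UNIV f" "degree q \<le> m"
  shows "(LINT z|\<mu>. f z * cnj (poly q z)) = (\<Sum>j\<le>m. cnj (coeff q j) * (LINT z|\<mu>. f z * cnj z ^ j))"
proof -
  have "(LINT z|\<mu>. f z * cnj (poly q z)) = (LINT z|\<mu>. (\<Sum>j\<le>m. cnj (coeff q j) * (f z * cnj z ^ j)))"
    by (rule Bochner_Integration.integral_cong[OF refl])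
       (simp add: poly_upto[OF assms(2)] sum_distrib_left mult_ac cnj_sum)
  also have "\<dots> = (\<Sum>j\<le>m. LINT z|\<mu>. cnj (coeff q j) * (f z * cnj z ^ j))"
    by (rule Bochner_Integration.integral_sum[where f = "\<lambda>j z. cnj (coeff q j) * (f z * cnj z ^ j)"])
       (intro intg continuous_intros assms)
  also have "\<dots> = (\<Sum>j\<le>m. cnj (coeff q j) * (LINT z|\<mu>. f z * cnj z ^ j))" by simp
  finally show ?thesis .
qed

lemma orth_poly:
  assumes "\<forall>j<k. (LINT z|\<mu>. poly p z * cnj z ^ j) = 0" "degree q \<le> k" "coeff q k = 0"
  shows "(LINT z|\<mu>. poly p z * cnj (poly q z)) = 0"
proof -
  have "(LINT z|\<mu>. poly p z * cnj (poly q z)) = (\<Sum>j\<le>k. cnj (coeff q j) * (LINT z|\<mu>. poly p z * cnj z ^ j))"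
    by (rule expand) (auto intro!: continuous_intros assms)
  also have "\<dots> = 0"
    using assms by (intro sum.neutral) (auto simp: le_less)
  finally show ?thesis .
qed

lemma norm_sq_complex:
  assumes "continuous_on UNIV f"
  shows "(LINT z|\<mu>. f z * cnj (f z)) = of_real (LINT z|\<mu>. (cmod (f z))\<^sup>2)"
proof -
  have "(LINT z|\<mu>. f z * cnj (f z)) = (LINT z|\<mu>. complex_of_real ((cmod (f z))\<^sup>2))"
    by (rule Bochner_Integration.integral_cong[OF refl]) (rule complex_norm_square[symmetric])
  also have "\<dots> = of_real (LINT z|\<mu>. (cmod (f z))\<^sup>2)" by (rule integral_complex_of_real)
  finally show ?thesis .
qed

abbreviation "P \<equiv> Pc \<mu>"
abbreviation "Ast k \<equiv> star_poly k (P k)"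
abbreviation "a \<equiv> alph \<mu>"
abbreviation "N k \<equiv> (LINT z|\<mu>. (cmod (poly (P k) z))\<^sup>2)"

definition good :: "nat \<Rightarrow> bool" where
  "good k \<longleftrightarrow> degree (P k) = k \<and> coeff (P k) k = 1 \<and> rc (P k) \<and>
     (\<forall>j<k. (LINT z|\<mu>. poly (P k) z * cnj z ^ j) = 0)"

lemma good0: "good 0"
  unfolding good_def by (simp add: rc_1)

lemma Ast_circ: "good k \<Longrightarrow> cmod z = 1 \<Longrightarrow> poly (Ast k) z = z ^ k * cnj (poly (P k) z)"
  unfolding good_def by (intro poly_star_circ) auto

lemma Ast_orth:
  assumes g: "good k" and j: "1 \<le> j" "j \<le> k"
  shows "(LINT z|\<mu>. poly (Ast k) z * cnj z ^ j) = 0"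
proof -
  have "(LINT z|\<mu>. poly (Ast k) z * cnj z ^ j) = (LINT z|\<mu>. cnj (poly (P k) z * cnj z ^ (k - j)))"
  proof (rule cong_circ)
    fix z :: complex assume z: "cmod z = 1"
    show "poly (Ast k) z * cnj z ^ j = cnj (poly (P k) z * cnj z ^ (k - j))"
      using Ast_circ[OF g z] circ_pow[OF z j(2)] by (simp add: mult_ac)
  qed (auto intro!: continuous_intros)
  also have "\<dots> = cnj (LINT z|\<mu>. poly (P k) z * cnj z ^ (k - j))" by (rule Bochner_Integration.integral_cnj)
  also have "\<dots> = 0" using g j unfolding good_def by auto
  finally show ?thesis .
qed

lemma zP_orth:
  assumes g: "good k" and j: "1 \<le> j" "j \<le> k"
  shows "(LINT z|\<mu>. z * poly (P k) z * cnj z ^ j) = 0"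
proof -
  have "(LINT z|\<mu>. z * poly (P k) z * cnj z ^ j) = (LINT z|\<mu>. poly (P k) z * cnj z ^ (j - 1))"
  proof (rule cong_circ)
    fix z :: complex assume z: "cmod z = 1"
    have "cnj z ^ j = cnj z * cnj z ^ (j - 1)" using j by (metis One_nat_def Suc_pred less_eq_Suc_le power_Suc)
    thus "z * poly (P k) z * cnj z ^ j = poly (P k) z * cnj z ^ (j - 1)"
      using circ_inv[OF z] by (simp add: mult_ac)
  qed (auto intro!: continuous_intros)
  also have "\<dots> = 0" using g j unfolding good_def by simp
  finally show ?thesis .
qed

lemma Pne: "good k \<Longrightarrow> P k \<noteq> 0"
  unfolding good_def by auto

lemma Npos: "good k \<Longrightarrow> N k > 0"
  using norm_pos Pne by blast

lemma I2: assumes g: "good k" shows "(LINT z|\<mu>. poly (Ast k) z) = of_real (N k)"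
proof -
  have dA: "degree (Ast k) \<le> k" by (rule degree_star_poly)
  have "(LINT z|\<mu>. poly (Ast k) z * cnj (poly (Ast k) z)) =
     (\<Sum>j\<le>k. cnj (coeff (Ast k) j) * (LINT z|\<mu>. poly (Ast k) z * cnj z ^ j))"
    by (rule expand[OF _ dA]) (auto intro!: continuous_intros)
  also have "\<dots> = cnj (coeff (Ast k) 0) * (LINT z|\<mu>. poly (Ast k) z * cnj z ^ 0) +
     (\<Sum>i<k. cnj (coeff (Ast k) (Suc i)) * (LINT z|\<mu>. poly (Ast k) z * cnj z ^ Suc i))"
    by (rule sum.atMost_shift)
  also have "(\<Sum>i<k. cnj (coeff (Ast k) (Suc i)) * (LINT z|\<mu>. poly (Ast k) z * cnj z ^ Suc i)) = 0"
    by (intro sum.neutral ballI mult_eq_0_iff[THEN iffD2] disjI2 Ast_orth[OF g]) auto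
  also have "cnj (coeff (Ast k) 0) * (LINT z|\<mu>. poly (Ast k) z * cnj z ^ 0) + 0 = (LINT z|\<mu>. poly (Ast k) z)"
    using g unfolding good_def by (simp add: star_poly_0)
  finally have e1: "(LINT z|\<mu>. poly (Ast k) z * cnj (poly (Ast k) z)) = (LINT z|\<mu>. poly (Ast k) z)" .
  have "(LINT z|\<mu>. poly (Ast k) z * cnj (poly (Ast k) z)) = of_real (LINT z|\<mu>. (cmod (poly (Ast k) z))\<^sup>2)"
    by (rule norm_sq_complex) (auto intro!: continuous_intros)
  also have "(LINT z|\<mu>. (cmod (poly (Ast k) z))\<^sup>2) = N k"
  proof (rule cong_circ)
    fix z :: complex assume z: "cmod z = 1"
    show "(cmod (poly (Ast k) z))\<^sup>2 = (cmod (poly (P k) z))\<^sup>2"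
      using Ast_circ[OF g z] z by (simp add: norm_mult norm_power)
  qed (auto intro!: continuous_intros)
  finally show ?thesis using e1 by simp
qed

lemma I1_real: assumes g: "good k"
  shows "cnj (LINT z|\<mu>. z * poly (P k) z) = (LINT z|\<mu>. z * poly (P k) z)"
proof -
  have rcP: "rc (P k)" using g unfolding good_def by simp
  have "cnj (LINT z|\<mu>. z * poly (P k) z) = (LINT z|\<mu>. cnj (z * poly (P k) z))"
    by (rule Bochner_Integration.integral_cnj[symmetric])
  also have "\<dots> = (LINT z|\<mu>. (\<lambda>z. z * poly (P k) z) (cnj z))"
    by (rule Bochner_Integration.integral_cong[OF refl]) (simp add: rc_poly_cnj[OF rcP])
  also have "\<dots> = (LINT z|\<mu>. z * poly (P k) z)"
    by (rule sym_int) (auto intro!: continuous_intros)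
  finally show ?thesis .
qed

lemma a_real: assumes g: "good k" shows "cnj (a k) = a k"
  using I1_real[OF g] I2[OF g] unfolding alph_def by simp


lemma polyQ: "poly (P (Suc k)) z = z * poly (P k) z - a k * poly (Ast k) z"
  unfolding Pc_Suc' by simp

lemma intQ:
  "(LINT z|\<mu>. poly (P (Suc k)) z * g z) = (LINT z|\<mu>. z * poly (P k) z * g z) - a k * (LINT z|\<mu>. poly (Ast k) z * g z)"
  if "continuous_on UNIV g"
proof -
  have "(LINT z|\<mu>. poly (P (Suc k)) z * g z) = (LINT z|\<mu>. z * poly (P k) z * g z - a k * (poly (Ast k) z * g z))"
    by (rule Bochner_Integration.integral_cong[OF refl]) (simp add: polyQ algebra_simps)
  also have "\<dots> = (LINT z|\<mu>. z * poly (P k) z * g z) - (LINT z|\<mu>. a k * (poly (Ast k) z * g z))"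
    by (rule Bochner_Integration.integral_diff) (auto intro!: intg continuous_intros that)
  also have "\<dots> = (LINT z|\<mu>. z * poly (P k) z * g z) - a k * (LINT z|\<mu>. poly (Ast k) z * g z)"
    by simp
  finally show ?thesis .
qed

lemma good_Suc:
  assumes g: "good k" shows "good (Suc k)"
proof -
  have dP: "degree (P k) = k" and cP: "coeff (P k) k = 1" and rP: "rc (P k)"
    using g unfolding good_def by auto
  have cQ: "coeff (P (Suc k)) i = coeff (pCons 0 (P k)) i - a k * coeff (Ast k) i" for i
    unfolding Pc_Suc' by simp
  have cA: "i > k \<Longrightarrow> coeff (Ast k) i = 0" for i by (simp add: star_poly_coeff)
  have c1: "coeff (P (Suc k)) (Suc k) = 1" using cQ[of "Suc k"] cP cA[of "Suc k"] by simp
  have "degree (P (Suc k)) \<le> Suc k"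
  proof (rule degree_le, intro allI impI)
    fix i assume i: "Suc k < i"
    then obtain i' where i': "i = Suc i'" "i' > k" by (cases i) auto
    show "coeff (P (Suc k)) i = 0" using cQ[of i] cA[of i] i i' dP by (simp add: coeff_eq_0)
  qed
  moreover have "Suc k \<le> degree (P (Suc k))" using c1 by (intro le_degree) simp
  ultimately have dQ: "degree (P (Suc k)) = Suc k" by simp
  have rQ: "rc (P (Suc k))" unfolding Pc_Suc'
    by (intro rc_diff rc_shift rc_smult rc_star rP a_real g)
  have oQ: "(LINT z|\<mu>. poly (P (Suc k)) z * cnj z ^ j) = 0" if j: "j < Suc k" for j
  proof (cases "j = 0")
    case True
    have "(LINT z|\<mu>. poly (P (Suc k)) z * cnj z ^ j) = (LINT z|\<mu>. z * poly (P k) z * 1) - a k * (LINT z|\<mu>. poly (Ast k) z * 1)"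
      using intQ[of "\<lambda>_. 1" k] True by simp
    also have "\<dots> = 0" using Npos[OF g] I2[OF g] unfolding alph_def by simp
    finally show ?thesis .
  next
    case False
    have "(LINT z|\<mu>. poly (P (Suc k)) z * cnj z ^ j) = (LINT z|\<mu>. z * poly (P k) z * cnj z ^ j) - a k * (LINT z|\<mu>. poly (Ast k) z * cnj z ^ j)"
      by (rule intQ) (auto intro!: continuous_intros)
    also have "\<dots> = 0" using zP_orth[OF g, of j] Ast_orth[OF g, of j] False j by simp
    finally show ?thesis .
  qed
  show ?thesis unfolding good_def using dQ c1 rQ oQ by auto
qed

lemma good: "good k"
  by (induction k) (auto intro: good0 good_Suc)

lemma a_real': "a k = of_real (Re (a k))"
  using a_real[OF good, of k] by (metis complex_cnj_cancel_iff complex_is_Real_iff Reals_cnj_iff of_real_Re)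

lemma N_Suc: "N (Suc k) = (1 - (Re (a k))\<^sup>2) * N k"
proof -
  have g: "good k" "good (Suc k)" using good by auto
  have rP: "rc (P k)" using g unfolding good_def by auto
  define r where "r = Re (a k)"
  have ar: "a k = of_real r" unfolding r_def by (rule a_real')
  have cQ: "cnj (poly (P (Suc k)) z) = cnj z * cnj (poly (P k) z) - a k * cnj (poly (Ast k) z)" for z
    using ar by (simp add: polyQ)
  have o1: "(LINT z|\<mu>. poly (P (Suc k)) z * cnj (poly (Ast k) z)) = 0"
    by (rule orth_poly[where k="Suc k"]) (use g(2) degree_star_poly[of k "P k"] in \<open>auto simp: good_def star_poly_coeff\<close>)
  have zz: "(LINT z|\<mu>. z * poly (P k) z * cnj (z * poly (P k) z)) = of_real (N k)"
  proof -
    have "(LINT z|\<mu>. z * poly (P k) z * cnj (z * poly (P k) z)) = of_real (LINT z|\<mu>. (cmod (z * poly (P k) z))\<^sup>2)"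
      by (rule norm_sq_complex) (auto intro!: continuous_intros)
    also have "(LINT z|\<mu>. (cmod (z * poly (P k) z))\<^sup>2) = N k"
      by (rule cong_circ) (auto intro!: continuous_intros simp: norm_mult)
    finally show ?thesis .
  qed
  have zA: "(LINT z|\<mu>. z * poly (P k) z * cnj (poly (Ast k) z)) = a k * of_real (N k)"
  proof -
    have "(LINT z|\<mu>. z * poly (P k) z * cnj (poly (Ast k) z)) =
       (\<Sum>j\<le>k. cnj (coeff (Ast k) j) * (LINT z|\<mu>. z * poly (P k) z * cnj z ^ j))"
      by (rule expand[OF _ degree_star_poly]) (auto intro!: continuous_intros)
    also have "\<dots> = cnj (coeff (Ast k) 0) * (LINT z|\<mu>. z * poly (P k) z * cnj z ^ 0) +
       (\<Sum>i<k. cnj (coeff (Ast k) (Suc i)) * (LINT z|\<mu>. z * poly (P k) z * cnj z ^ Suc i))"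
      by (rule sum.atMost_shift)
    also have "(\<Sum>i<k. cnj (coeff (Ast k) (Suc i)) * (LINT z|\<mu>. z * poly (P k) z * cnj z ^ Suc i)) = 0"
      by (intro sum.neutral ballI mult_eq_0_iff[THEN iffD2] disjI2 zP_orth[OF g(1)]) auto
    also have "cnj (coeff (Ast k) 0) * (LINT z|\<mu>. z * poly (P k) z * cnj z ^ 0) + 0 = (LINT z|\<mu>. z * poly (P k) z)"
      using g(1) unfolding good_def by (simp add: star_poly_0)
    also have "\<dots> = a k * of_real (N k)"
      using Npos[OF g(1)] I2[OF g(1)] unfolding alph_def by simp
    finally show ?thesis .
  qed
  have Az: "(LINT z|\<mu>. poly (Ast k) z * cnj (z * poly (P k) z)) = a k * of_real (N k)"
  proof -
    have "(LINT z|\<mu>. poly (Ast k) z * cnj (z * poly (P k) z)) = (LINT z|\<mu>. cnj (z * poly (P k) z * cnj (poly (Ast k) z)))"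
      by (rule Bochner_Integration.integral_cong[OF refl]) simp
    also have "\<dots> = cnj (LINT z|\<mu>. z * poly (P k) z * cnj (poly (Ast k) z))"
      by (rule Bochner_Integration.integral_cnj)
    finally show ?thesis using zA ar by simp
  qed
  have "of_real (N (Suc k)) = (LINT z|\<mu>. poly (P (Suc k)) z * cnj (poly (P (Suc k)) z))"
    by (rule norm_sq_complex[symmetric]) (auto intro!: continuous_intros)
  also have "\<dots> = (LINT z|\<mu>. poly (P (Suc k)) z * cnj (z * poly (P k) z)) - a k * (LINT z|\<mu>. poly (P (Suc k)) z * cnj (poly (Ast k) z))"
  proof -
    have "(LINT z|\<mu>. poly (P (Suc k)) z * cnj (poly (P (Suc k)) z)) = (LINT z|\<mu>. poly (P (Suc k)) z * cnj (z * poly (P k) z) - a k * (poly (P (Suc k)) z * cnj (poly (Ast k) z)))"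
      by (rule Bochner_Integration.integral_cong[OF refl]) (simp add: cQ algebra_simps)
    also have "\<dots> = (LINT z|\<mu>. poly (P (Suc k)) z * cnj (z * poly (P k) z)) - (LINT z|\<mu>. a k * (poly (P (Suc k)) z * cnj (poly (Ast k) z)))"
      by (rule Bochner_Integration.integral_diff) (auto intro!: intg continuous_intros)
    finally show ?thesis by simp
  qed
  also have "(LINT z|\<mu>. poly (P (Suc k)) z * cnj (z * poly (P k) z)) = of_real (N k) - a k * (a k * of_real (N k))"
  proof -
    have "continuous_on UNIV (\<lambda>z. cnj (z * poly (P k) z))" by (auto intro!: continuous_intros)
    from intQ[OF this, of k] show ?thesis using zz Az by simp
  qed
  finally have "of_real (N (Suc k)) = of_real (N k) - a k * (a k * of_real (N k))" using o1 by simp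
  hence "complex_of_real (N (Suc k)) = of_real ((1 - r\<^sup>2) * N k)" using ar by (simp add: algebra_simps power2_eq_square)
  thus ?thesis unfolding r_def of_real_eq_iff .
qed

lemma a_lt1: "(Re (a k))\<^sup>2 < 1"
proof -
  have "N (Suc k) > 0" "N k > 0" using Npos good by auto
  thus ?thesis using N_Suc[of k] by (smt (verit) mult_nonpos_nonneg)
qed

lemma mOP_eq: "mOP \<mu> k = P k"
  unfolding mOP_def
proof (rule the_equality)
  have g: "good k" by (rule good)
  show "is_monic_OP \<mu> k (P k)" using g unfolding good_def is_monic_OP_def by auto
  fix q assume q: "is_monic_OP \<mu> k q"
  define d where "d = P k - q"
  have od: "\<forall>j<k. (LINT z|\<mu>. poly d z * cnj z ^ j) = 0"
  proof (intro allI impI)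
    fix j assume j: "j < k"
    have "(LINT z|\<mu>. poly d z * cnj z ^ j) = (LINT z|\<mu>. poly (P k) z * cnj z ^ j - poly q z * cnj z ^ j)"
      by (rule Bochner_Integration.integral_cong[OF refl]) (simp add: d_def algebra_simps)
    also have "\<dots> = (LINT z|\<mu>. poly (P k) z * cnj z ^ j) - (LINT z|\<mu>. poly q z * cnj z ^ j)"
      by (rule Bochner_Integration.integral_diff) (auto intro!: intg continuous_intros)
    finally have "(LINT z|\<mu>. poly d z * cnj z ^ j) = (LINT z|\<mu>. poly (P k) z * cnj z ^ j) - (LINT z|\<mu>. poly q z * cnj z ^ j)" .
    thus "(LINT z|\<mu>. poly d z * cnj z ^ j) = 0" using j g q unfolding good_def is_monic_OP_def by simp
  qed
  have dd: "degree d \<le> k" unfolding d_def using g q unfolding good_def is_monic_OP_def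
    by (metis degree_diff_le order_refl)
  have cd: "coeff d k = 0" unfolding d_def using g q unfolding good_def is_monic_OP_def by auto
  have "(LINT z|\<mu>. poly d z * cnj (poly d z)) = 0" by (rule orth_poly[OF od dd cd])
  hence "(LINT z|\<mu>. (cmod (poly d z))\<^sup>2) = 0"
  proof -
    have "continuous_on UNIV (\<lambda>z. poly d z)" by (auto intro!: continuous_intros)
    thus ?thesis using norm_sq_complex[of "poly d"] \<open>(LINT z|\<mu>. poly d z * cnj (poly d z)) = 0\<close> by simp
  qed
  hence "d = 0" using norm_pos by fastforce
  thus "q = P k" unfolding d_def by simp
qed

lemma kappa_eq: "kappa \<mu> k = 1 / sqrt (N k)"
  unfolding kappa_def mOP_eq ..


abbreviation "kap \<equiv> kappa \<mu>"

lemma kap_pos: "kap k > 0"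
  unfolding kappa_eq using Npos[OF good] by simp

lemma kap_sq: "(kap k)\<^sup>2 = 1 / N k"
  unfolding kappa_eq using Npos[OF good, of k] by (simp add: power_divide)

lemma kap_rel: "(kap k)\<^sup>2 = (kap (Suc k))\<^sup>2 * (1 - (Re (a k))\<^sup>2)"
  using N_Suc[of k] Npos[OF good, of k] Npos[OF good, of "Suc k"] unfolding kap_sq by (simp add: field_simps)

lemma oOP_eq: "oOP \<mu> k = smult (of_real (kap k)) (P k)"
  unfolding oOP_def mOP_eq ..

lemma Kker_eq: "Kker \<mu> n z w = (\<Sum>i<n. of_real ((kap i)\<^sup>2) * (poly (P i) z * cnj (poly (P i) w)))"
  unfolding Kker_def oOP_eq by (intro sum.cong refl) (simp add: power2_eq_square)

lemma Ast_Suc: "poly (Ast (Suc k)) z = poly (Ast k) z - a k * (z * poly (P k) z)"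
proof -
  have d: "degree (P k) \<le> k" using good[of k] unfolding good_def by simp
  have "Ast (Suc k) = Ast k - smult (a k) ([:0,1:] * P k)"
    unfolding Pc_Suc' star_poly_diff star_poly_shift star_poly_smult
    by (simp add: star_poly_Suc[OF degree_star_poly] star_star[OF d])
  thus ?thesis by simp
qed

lemma CD: "Kker \<mu> (Suc k) z w * (1 - cnj w * z) = of_real ((kap k)\<^sup>2) *
   (poly (Ast k) z * cnj (poly (Ast k) w) - z * poly (P k) z * (cnj w * cnj (poly (P k) w)))"
proof (induction k)
  case 0
  show ?case by (simp add: Kker_eq star_poly_def algebra_simps)
next
  case (Suc k)
  define r where "r = Re (a k)"
  have ar: "a k = of_real r" unfolding r_def by (rule a_real')
  have KS: "Kker \<mu> (Suc (Suc k)) z w = Kker \<mu> (Suc k) z w + of_real ((kap (Suc k))\<^sup>2) * (poly (P (Suc k)) z * cnj (poly (P (Suc k)) w))"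
    unfolding Kker_eq by simp
  have kr: "complex_of_real ((kap k)\<^sup>2) = of_real ((kap (Suc k))\<^sup>2) * (1 - of_real r * of_real r)"
    using kap_rel[of k] unfolding r_def[symmetric] by (simp add: power2_eq_square)
  have "Kker \<mu> (Suc (Suc k)) z w * (1 - cnj w * z) =
    (Kker \<mu> (Suc k) z w + of_real ((kap (Suc k))\<^sup>2) * ((z * poly (P k) z - of_real r * poly (Ast k) z) *
       (cnj w * cnj (poly (P k) w) - of_real r * cnj (poly (Ast k) w)))) * (1 - cnj w * z)"
    unfolding KS polyQ ar by simp
  also have "\<dots> = of_real ((kap (Suc k))\<^sup>2) * ((poly (Ast k) z - of_real r * (z * poly (P k) z)) *
       (cnj (poly (Ast k) w) - of_real r * (cnj w * cnj (poly (P k) w))) - (cnj w * z) *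
       ((z * poly (P k) z - of_real r * poly (Ast k) z) * (cnj w * cnj (poly (P k) w) - of_real r * cnj (poly (Ast k) w))))"
    by (rule CD_alg[OF kr]) (use Suc.IH in \<open>simp add: mult_ac\<close>)
  also have "\<dots> = of_real ((kap (Suc k))\<^sup>2) *
   (poly (Ast (Suc k)) z * cnj (poly (Ast (Suc k)) w) - z * poly (P (Suc k)) z * (cnj w * cnj (poly (P (Suc k)) w)))"
    unfolding Ast_Suc polyQ ar by (simp add: algebra_simps)
  finally show ?case .
qed

end


lemma cnj_sq: "u * cnj u = complex_of_real ((cmod u)\<^sup>2)"
  by (rule complex_norm_square[symmetric])

context opuc
begin

definition KR :: "nat \<Rightarrow> complex \<Rightarrow> real" where
  "KR m z = (\<Sum>i<Suc m. (kap i)\<^sup>2 * (cmod (poly (P i) z))\<^sup>2)"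

lemma Kker_diag: "Kker \<mu> (Suc m) z z = of_real (KR m z)"
  unfolding Kker_eq KR_def of_real_sum
  by (intro sum.cong refl) (simp add: cnj_sq)

lemma KR_pos: "KR m z > 0"
proof -
  have "KR m z = (kap 0)\<^sup>2 * (cmod (poly (P 0) z))\<^sup>2 + (\<Sum>i<m. (kap (Suc i))\<^sup>2 * (cmod (poly (P (Suc i)) z))\<^sup>2)"
    unfolding KR_def by (rule sum.lessThan_Suc_shift)
  moreover have "(\<Sum>i<m. (kap (Suc i))\<^sup>2 * (cmod (poly (P (Suc i)) z))\<^sup>2) \<ge> 0"
    by (intro sum_nonneg) auto
  moreover have "(kap 0)\<^sup>2 > 0" using kap_pos[of 0] by simp
  moreover have "(kap 0)\<^sup>2 * (cmod (poly (P 0) z))\<^sup>2 = (kap 0)\<^sup>2" by simp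
  ultimately show ?thesis by linarith
qed

lemma disk: assumes "cmod z < 1" shows "cmod (z * poly (P m) z) < cmod (poly (Ast m) z)"
proof -
  have "Kker \<mu> (Suc m) z z * (1 - cnj z * z) = of_real ((kap m)\<^sup>2) *
     (poly (Ast m) z * cnj (poly (Ast m) z) - z * poly (P m) z * (cnj z * cnj (poly (P m) z)))"
    by (rule CD)
  also have "z * poly (P m) z * (cnj z * cnj (poly (P m) z)) = (z * poly (P m) z) * cnj (z * poly (P m) z)"
    by simp
  finally have "complex_of_real (KR m z * (1 - (cmod z)\<^sup>2)) = of_real ((kap m)\<^sup>2 * ((cmod (poly (Ast m) z))\<^sup>2 - (cmod (z * poly (P m) z))\<^sup>2))"
    unfolding Kker_diag cnj_sq by (simp add: mult.commute[of "cnj z" z] cnj_sq)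
  hence e: "KR m z * (1 - (cmod z)\<^sup>2) = (kap m)\<^sup>2 * ((cmod (poly (Ast m) z))\<^sup>2 - (cmod (z * poly (P m) z))\<^sup>2)"
    using of_real_eq_iff by blast
  have "KR m z * (1 - (cmod z)\<^sup>2) > 0" using KR_pos[of m z] assms
    by (simp add: abs_square_less_1)
  hence "(cmod (poly (Ast m) z))\<^sup>2 - (cmod (z * poly (P m) z))\<^sup>2 > 0"
    using e kap_pos[of m] by (metis zero_less_mult_pos zero_less_power)
  thus ?thesis by (simp add: power_less_imp_less_base)
qed

abbreviation "pD m \<equiv> POP \<mu> (Suc m) 1"

lemma poly_POP: "poly (POP \<mu> (Suc m) \<beta>) z = z * poly (P m) z - \<beta> * poly (Ast m) z"
  unfolding POP_def mOP_eq by simp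

lemma pD_eq: "pD m = [:0,1:] * P m - Ast m"
  unfolding POP_def mOP_eq by simp

lemma deg_pD: "degree (pD m) = Suc m" and lc_pD: "coeff (pD m) (Suc m) = 1"
proof -
  have dP: "degree (P m) = m" "coeff (P m) m = 1" using good[of m] unfolding good_def by auto
  have cD: "coeff (pD m) i = coeff (pCons 0 (P m)) i - coeff (Ast m) i" for i
    unfolding pD_eq by simp
  show c1: "coeff (pD m) (Suc m) = 1" using cD[of "Suc m"] dP by (simp add: star_poly_coeff)
  have "degree (pD m) \<le> Suc m"
  proof (rule degree_le, intro allI impI)
    fix i assume i: "Suc m < i"
    then obtain i' where i': "i = Suc i'" "i' > m" by (cases i) auto
    show "coeff (pD m) i = 0" using cD[of i] i i' dP by (simp add: coeff_eq_0 star_poly_coeff)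
  qed
  moreover have "Suc m \<le> degree (pD m)" using c1 by (intro le_degree) simp
  ultimately show "degree (pD m) = Suc m" by simp
qed

lemma pD_ne: "pD m \<noteq> 0" using lc_pD[of m] by auto

lemma star_pD: "star_poly (Suc m) (pD m) = - pD m"
proof -
  have d: "degree (P m) \<le> m" using good[of m] unfolding good_def by simp
  show ?thesis unfolding pD_eq star_poly_diff star_poly_shift
    by (simp add: star_poly_Suc[OF degree_star_poly] star_star[OF d])
qed

lemma root_circ: assumes "poly (pD m) \<zeta> = 0" shows "cmod \<zeta> = 1"
proof -
  have "\<not> cmod \<zeta> < 1"
  proof
    assume "cmod \<zeta> < 1"
    from disk[OF this, of m] have "\<zeta> * poly (P m) \<zeta> \<noteq> poly (Ast m) \<zeta>" by auto
    thus False using assms poly_POP[of m 1 \<zeta>] by simp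
  qed
  moreover have "\<not> cmod \<zeta> > 1"
  proof
    assume g1: "cmod \<zeta> > 1"
    hence nz: "\<zeta> \<noteq> 0" by auto
    have "poly (star_poly (Suc m) (pD m)) \<zeta> = \<zeta> ^ Suc m * poly (pD m) (1 / \<zeta>)"
      by (rule poly_star[OF nz]) (simp add: deg_pD)
    hence "poly (pD m) (1 / \<zeta>) = 0" using assms nz by (simp add: star_pD)
    moreover have "cmod (1 / \<zeta>) < 1" using g1 by (simp add: norm_divide divide_less_eq)
    ultimately show False using disk[of "1/\<zeta>" m] poly_POP[of m 1 "1/\<zeta>"] by auto
  qed
  ultimately show ?thesis by simp
qed

lemma key_id:
  assumes r: "poly (pD m) \<zeta> = 0" and Q: "pD m = [:-\<zeta>,1:] * Q"
  shows "cnj \<zeta> * of_real (KR m \<zeta>) = of_real ((kap m)\<^sup>2) * cnj (poly (Ast m) \<zeta>) * poly Q \<zeta>"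
proof -
  have c1: "cmod \<zeta> = 1" by (rule root_circ[OF r])
  have zc: "cnj \<zeta> * \<zeta> = 1" using circ_inv[OF c1] by (simp add: mult.commute)
  have Ar: "poly (Ast m) \<zeta> = \<zeta> * poly (P m) \<zeta>" using r poly_POP[of m 1 \<zeta>] by simp
  define Kp where "Kp = (\<Sum>i<Suc m. smult (of_real ((kap i)\<^sup>2) * cnj (poly (P i) \<zeta>)) (P i))"
  have pK: "poly Kp z = Kker \<mu> (Suc m) z \<zeta>" for z
    unfolding Kp_def Kker_eq poly_sum by (intro sum.cong refl) (simp add: mult_ac)
  define R where "R = smult (cnj \<zeta>) Kp - smult (of_real ((kap m)\<^sup>2) * cnj (poly (Ast m) \<zeta>)) Q"
  have "poly ([:-\<zeta>,1:] * R) z = 0" for z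
  proof -
    have cd: "Kker \<mu> (Suc m) z \<zeta> * (1 - cnj \<zeta> * z) = of_real ((kap m)\<^sup>2) *
       (poly (Ast m) z * cnj (poly (Ast m) \<zeta>) - z * poly (P m) z * (cnj \<zeta> * cnj (poly (P m) \<zeta>)))"
      by (rule CD)
    have "poly (pD m) z = (z - \<zeta>) * poly Q z" unfolding Q by (simp add: algebra_simps)
    hence Dz: "z * poly (P m) z - poly (Ast m) z = (z - \<zeta>) * poly Q z" using poly_POP[of m 1 z] by simp
    have cA: "cnj (poly (Ast m) \<zeta>) = cnj \<zeta> * cnj (poly (P m) \<zeta>)" using Ar by simp
    have "1 - cnj \<zeta> * z = - cnj \<zeta> * (z - \<zeta>)" using zc by (simp add: algebra_simps)
    hence "Kker \<mu> (Suc m) z \<zeta> * (- cnj \<zeta> * (z - \<zeta>)) = - of_real ((kap m)\<^sup>2) * cnj (poly (Ast m) \<zeta>) * ((z - \<zeta>) * poly Q z)"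
      using cd unfolding Dz[symmetric] cA by (simp add: algebra_simps)
    thus ?thesis unfolding R_def by (simp add: pK algebra_simps)
  qed
  hence "[:-\<zeta>,1:] * R = 0" using poly_all_0_iff_0 by blast
  moreover have "[:-\<zeta>,1:] \<noteq> 0" by simp
  ultimately have "R = 0" using mult_eq_0_iff by blast
  hence "poly R \<zeta> = 0" by simp
  thus ?thesis unfolding R_def using pK[of \<zeta>] Kker_diag[of m \<zeta>] by simp
qed

end


context opuc
begin

abbreviation "Z m \<equiv> {\<zeta>. poly (pD m) \<zeta> = 0}"
abbreviation "w m \<zeta> \<equiv> sigma_wt \<mu> (Suc m) \<zeta>"

lemma rsf: "rsquarefree (pD m)"
  unfolding rsquarefree_roots
proof (intro allI notI)
  fix r assume h: "poly (pD m) r = 0 \<and> poly (pderiv (pD m)) r = 0"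
  then obtain Q where Q: "pD m = [:-r,1:] * Q" using poly_eq_0_iff_dvd by (metis dvdE)
  have k: "cnj r * of_real (KR m r) = of_real ((kap m)\<^sup>2) * cnj (poly (Ast m) r) * poly Q r"
    using key_id[OF conjunct1[OF h] Q] .
  have d1: "pderiv [:-r,1:] = 1" by (simp add: pderiv_pCons)
  have "pderiv (pD m) = [:-r,1:] * pderiv Q + Q * pderiv [:-r,1:]" unfolding Q by (rule pderiv_mult)
  hence "pderiv (pD m) = [:-r,1:] * pderiv Q + Q" unfolding d1 by simp
  hence "poly Q r = 0" using h by simp
  hence "cnj r * of_real (KR m r) = 0" using k by simp
  moreover have "r \<noteq> 0" using root_circ[OF conjunct1[OF h]] by auto
  ultimately show False using KR_pos[of m r] by simp
qed

lemma Zfin: "finite (Z m)" by (rule poly_roots_finite[OF pD_ne])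

lemma Zprod: "pD m = (\<Prod>\<zeta>\<in>Z m. [:-\<zeta>,1:])"
proof -
  have "lead_coeff (pD m) = 1" using deg_pD lc_pD by simp
  thus ?thesis using complex_poly_decompose_rsquarefree[OF rsf[of m]] by simp
qed

lemma Zcard: "card (Z m) = Suc m"
proof -
  have "Suc m = degree (\<Prod>\<zeta>\<in>Z m. [:-\<zeta>,1::complex:])" using deg_pD[of m] Zprod[of m] by simp
  also have "\<dots> = (\<Sum>\<zeta>\<in>Z m. degree [:-\<zeta>,1::complex:])" by (rule degree_prod_sum_eq) auto
  also have "\<dots> = card (Z m)" by simp
  finally show ?thesis by simp
qed

lemma pD_split: "\<zeta> \<in> Z m \<Longrightarrow> pD m = [:-\<zeta>,1:] * (\<Prod>j\<in>Z m - {\<zeta>}. [:-j,1:])"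
  using Zprod[of m] Zfin[of m] by (metis prod.remove)

lemma wt_eq: assumes z: "\<zeta> \<in> Z m"
  shows "poly (Ast m) \<zeta> / (\<Prod>j\<in>Z m - {\<zeta>}. (\<zeta> - j)) = \<zeta> * of_real (w m \<zeta>)"
proof -
  have r: "poly (pD m) \<zeta> = 0" using z by simp
  have c1: "cmod \<zeta> = 1" by (rule root_circ[OF r])
  have zc: "cnj \<zeta> * \<zeta> = 1" using circ_inv[OF c1] by (simp add: mult.commute)
  define q where "q = (\<Prod>j\<in>Z m - {\<zeta>}. (\<zeta> - j))"
  define A where "A = poly (Ast m) \<zeta>"
  define K where "K = KR m \<zeta>"
  define k2 where "k2 = (kap m)\<^sup>2"
  have key: "cnj \<zeta> * of_real K = of_real k2 * cnj A * q"
    using key_id[OF r pD_split[OF z]] unfolding q_def A_def K_def k2_def by (simp add: poly_prod)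
  have Kp: "K > 0" unfolding K_def by (rule KR_pos)
  have k2p: "k2 > 0" unfolding k2_def using kap_pos[of m] by simp
  have zn: "\<zeta> \<noteq> 0" using c1 by auto
  have lhs_ne: "cnj \<zeta> * of_real K \<noteq> 0" using Kp zn by simp
  hence An: "cnj A \<noteq> 0" and qn: "q \<noteq> 0" using key by auto
  have Ar: "A = \<zeta> * poly (P m) \<zeta>" using r poly_POP[of m 1 \<zeta>] unfolding A_def by simp
  have wq: "w m \<zeta> = k2 * (cmod A)\<^sup>2 / K"
    unfolding sigma_wt_def K_def k2_def Ar
    using Kker_diag[of m \<zeta>] kap_pos[of m] c1
    by (simp add: oOP_eq norm_mult power_mult_distrib)
  have AA: "A * cnj A = of_real ((cmod A)\<^sup>2)" by (rule cnj_sq)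
  have "A / q = A * (of_real k2 * cnj A) / (cnj \<zeta> * of_real K)"
    using key qn An k2p by (simp add: field_simps)
  also have "\<dots> = of_real (k2 * (cmod A)\<^sup>2) / (cnj \<zeta> * of_real K)"
    using AA by (simp add: mult_ac)
  also have "\<dots> = \<zeta> * of_real (k2 * (cmod A)\<^sup>2 / K)"
    using zc Kp zn by (simp add: field_simps)
  finally show ?thesis unfolding q_def[symmetric] A_def[symmetric] wq .
qed

lemma A_expand:
  assumes nz: "poly (pD m) z \<noteq> 0"
  shows "poly (Ast m) z = poly (pD m) z * (\<Sum>\<zeta>\<in>Z m. \<zeta> * of_real (w m \<zeta>) / (z - \<zeta>))"
proof -
  have dA: "degree (Ast m) < card (Z m)" using degree_star_poly[of m "P m"] Zcard[of m] by simp
  have "poly (Ast m) z = (\<Sum>\<zeta>\<in>Z m. poly (Ast m) \<zeta> / (\<Prod>j\<in>Z m-{\<zeta>}. (\<zeta> - j)) * (\<Prod>j\<in>Z m-{\<zeta>}. (z - j)))"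
    by (rule lagrange[OF Zfin dA])
  also have "\<dots> = (\<Sum>\<zeta>\<in>Z m. \<zeta> * of_real (w m \<zeta>) * (poly (pD m) z / (z - \<zeta>)))"
  proof (intro sum.cong refl)
    fix \<zeta> assume z: "\<zeta> \<in> Z m"
    have "poly (pD m) z = (z - \<zeta>) * (\<Prod>j\<in>Z m-{\<zeta>}. (z - j))"
      using arg_cong[OF pD_split[OF z], of "\<lambda>p. poly p z"] by (simp add: poly_prod algebra_simps)
    moreover have "z \<noteq> \<zeta>" using z nz by auto
    ultimately have "(\<Prod>j\<in>Z m-{\<zeta>}. (z - j)) = poly (pD m) z / (z - \<zeta>)" by (simp add: field_simps)
    thus "poly (Ast m) \<zeta> / (\<Prod>j\<in>Z m-{\<zeta>}. (\<zeta> - j)) * (\<Prod>j\<in>Z m-{\<zeta>}. (z - j)) =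
      \<zeta> * of_real (w m \<zeta>) * (poly (pD m) z / (z - \<zeta>))"
      using wt_eq[OF z] by simp
  qed
  also have "\<dots> = poly (pD m) z * (\<Sum>\<zeta>\<in>Z m. \<zeta> * of_real (w m \<zeta>) / (z - \<zeta>))"
    by (simp add: sum_distrib_left field_simps)
  finally show ?thesis .
qed

lemma A0: "poly (Ast m) 0 = 1"
  using good[of m] unfolding good_def by (simp add: poly_0_coeff_0 star_poly_0)

lemma wsum: "(\<Sum>\<zeta>\<in>Z m. w m \<zeta>) = 1"
proof -
  have D0: "poly (pD m) 0 = -1" using poly_POP[of m 1 0] A0[of m] by simp
  have "1 = poly (pD m) 0 * (\<Sum>\<zeta>\<in>Z m. \<zeta> * of_real (w m \<zeta>) / (0 - \<zeta>))"
    using A_expand[of m 0] D0 A0[of m] by simp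
  also have "\<dots> = (\<Sum>\<zeta>\<in>Z m. of_real (w m \<zeta>))"
    unfolding D0 sum_distrib_left
  proof (intro sum.cong refl)
    fix \<zeta> assume "\<zeta> \<in> Z m"
    hence "\<zeta> \<noteq> 0" using root_circ[of m \<zeta>] by auto
    thus "- 1 * (\<zeta> * complex_of_real (w m \<zeta>) / (0 - \<zeta>)) = complex_of_real (w m \<zeta>)" by simp
  qed
  finally have "complex_of_real (\<Sum>\<zeta>\<in>Z m. w m \<zeta>) = 1" by simp
  thus ?thesis using of_real_eq_1_iff by blast
qed

lemma F_formula:
  assumes z: "cmod z < 1"
  shows "Ffun \<mu> (Suc m) z = (\<Sum>\<zeta>\<in>Z m. complex_of_real (w m \<zeta>) * ((\<zeta> + z) / (\<zeta> - z)))"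
proof -
  have nz: "poly (pD m) z \<noteq> 0" using root_circ[of m z] z by auto
  define S where "S = (\<Sum>\<zeta>\<in>Z m. \<zeta> * of_real (w m \<zeta>) / (z - \<zeta>))"
  have AS: "poly (Ast m) z = poly (pD m) z * S" unfolding S_def by (rule A_expand[OF nz])
  have Dz: "poly (pD m) z = z * poly (P m) z - poly (Ast m) z" using poly_POP[of m 1 z] by simp
  have "Ffun \<mu> (Suc m) z = - (z * poly (P m) z + poly (Ast m) z) / poly (pD m) z"
    unfolding Ffun_def using poly_POP[of m "-1" z] by simp
  also have "\<dots> = - (poly (pD m) z + 2 * poly (Ast m) z) / poly (pD m) z"
    using Dz by simp
  also have "\<dots> = - 1 - 2 * S" using nz unfolding AS by (simp add: field_simps)
  also have "\<dots> = (\<Sum>\<zeta>\<in>Z m. complex_of_real (w m \<zeta>) * ((\<zeta> + z) / (\<zeta> - z)))"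
  proof -
    have "(\<Sum>\<zeta>\<in>Z m. complex_of_real (w m \<zeta>) * ((\<zeta> + z) / (\<zeta> - z))) =
          (\<Sum>\<zeta>\<in>Z m. - complex_of_real (w m \<zeta>) - 2 * (\<zeta> * of_real (w m \<zeta>) / (z - \<zeta>)))"
    proof (intro sum.cong refl)
      fix \<zeta> assume "\<zeta> \<in> Z m"
      hence "\<zeta> \<noteq> z" using nz by auto
      thus "complex_of_real (w m \<zeta>) * ((\<zeta> + z) / (\<zeta> - z)) = - complex_of_real (w m \<zeta>) - 2 * (\<zeta> * of_real (w m \<zeta>) / (z - \<zeta>))"
        by (simp add: field_simps)
    qed
    also have "\<dots> = - complex_of_real (\<Sum>\<zeta>\<in>Z m. w m \<zeta>) - 2 * S"
      unfolding S_def by (simp add: sum_subtractf sum_distrib_left sum_negf)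
    finally show ?thesis using wsum[of m] by simp
  qed
  finally show ?thesis .
qed

end


lemma frac_cancel: fixes c k W Y V :: complex
  shows "k \<noteq> 0 \<Longrightarrow> Y \<noteq> 0 \<Longrightarrow> V \<noteq> 0 \<Longrightarrow> c * (k*W/Y) / (k*V/Y) = c*W/V"
  by (simp add: field_simps)

lemma frac2a: fixes A B c W :: complex
  assumes "A-B\<noteq>0" "A+B\<noteq>0" shows "(2*W/((A-B)*(A-B)))/((A+B)/(A-B)) = 2*W/((A-B)*(A+B))"
  using assms by (simp add: divide_divide_eq_right)

lemma frac2: fixes A B c W :: complex
  assumes "A-B\<noteq>0" "A+B\<noteq>0" shows "c*W/((A-B)*(A+B)) = c/2*(2*W/((A-B)*(A-B)))/((A+B)/(A-B))"
proof -
  have "(2*W/((A-B)*(A-B)))/((A+B)/(A-B)) = 2*W/((A-B)*(A+B))" using assms by (rule frac2a)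
  hence "c/2*(2*W/((A-B)*(A-B)))/((A+B)/(A-B)) = c/2*(2*W/((A-B)*(A+B)))" by (simp add: mult.assoc)
  thus ?thesis by simp
qed

lemma h_alg:
  fixes A B Ap Bp \<alpha> z :: complex
  assumes n1: "A - \<alpha>*B \<noteq> 0" and n2: "A - B \<noteq> 0" and n3: "A + B \<noteq> 0" and n4: "1 - \<alpha>*\<alpha> \<noteq> 0"
  shows "(1 - z\<^sup>2) * (((Bp - \<alpha>*Ap)*(A - \<alpha>*B) - (B - \<alpha>*A)*(Ap - \<alpha>*Bp))/((A - \<alpha>*B)*(A - \<alpha>*B)))
           / (1 - ((B - \<alpha>*A)/(A - \<alpha>*B))\<^sup>2)
       = (1 - z\<^sup>2) / 2 * (((Ap+Bp)*(A-B) - (A+B)*(Ap-Bp))/((A-B)*(A-B))) / ((A+B)/(A-B))"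
proof -
  define W where "W = Bp*A - B*Ap"
  have s1: "(Bp - \<alpha>*Ap)*(A - \<alpha>*B) - (B - \<alpha>*A)*(Ap - \<alpha>*Bp) = (1-\<alpha>*\<alpha>)*W"
    unfolding W_def by algebra
  have s2: "(A - \<alpha>*B)*(A - \<alpha>*B) - (B - \<alpha>*A)*(B - \<alpha>*A) = (1-\<alpha>*\<alpha>)*((A-B)*(A+B))"
    by algebra
  have s3: "(Ap+Bp)*(A-B) - (A+B)*(Ap-Bp) = 2*W"
    unfolding W_def by algebra
  have e1: "1 - ((B - \<alpha>*A)/(A - \<alpha>*B))\<^sup>2 = (1-\<alpha>*\<alpha>)*((A-B)*(A+B)) / ((A - \<alpha>*B)*(A - \<alpha>*B))"
  proof -
    have gen: "(1 - (X/Y)\<^sup>2) * (Y*Y) = Y*Y - X*X" if "Y \<noteq> 0" for X Y :: complex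
      using that by (simp add: field_simps power2_eq_square)
    have "1 - ((B - \<alpha>*A)/(A - \<alpha>*B))\<^sup>2 = ((A - \<alpha>*B)*(A - \<alpha>*B) - (B - \<alpha>*A)*(B - \<alpha>*A)) / ((A - \<alpha>*B)*(A - \<alpha>*B))"
      using gen[OF n1, of "B - \<alpha>*A"] n1 by (simp add: eq_divide_eq)
    thus ?thesis unfolding s2 .
  qed
  have "(1 - z\<^sup>2) * (((Bp - \<alpha>*Ap)*(A - \<alpha>*B) - (B - \<alpha>*A)*(Ap - \<alpha>*Bp))/((A - \<alpha>*B)*(A - \<alpha>*B)))
           / (1 - ((B - \<alpha>*A)/(A - \<alpha>*B))\<^sup>2) =
        (1 - z\<^sup>2) * ((1-\<alpha>*\<alpha>)*W/((A - \<alpha>*B)*(A - \<alpha>*B))) / ((1-\<alpha>*\<alpha>)*((A-B)*(A+B)) / ((A - \<alpha>*B)*(A - \<alpha>*B)))"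
    unfolding s1 e1 ..
  also have "\<dots> = (1 - z\<^sup>2) * W / ((A-B)*(A+B))"
    by (rule frac_cancel) (use n1 n2 n3 n4 in auto)
  also have "\<dots> = (1 - z\<^sup>2) / 2 * (2*W/((A-B)*(A-B))) / ((A+B)/(A-B))"
    by (rule frac2[OF n2 n3])
  finally show ?thesis unfolding s3 .
qed

context opuc
begin

lemma h_formula:
  assumes z: "cmod z < 1"
  shows "hfun \<mu> (Suc m) z = (1 - z\<^sup>2) / 2 * deriv (Ffun \<mu> (Suc m)) z / Ffun \<mu> (Suc m) z"
proof -
  define pA where "pA = Ast m"
  define pB where "pB = [:0,1:] * P m"
  define \<alpha> where "\<alpha> = a m"
  have ar: "\<alpha> = of_real (Re (a m))" unfolding \<alpha>_def by (rule a_real')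
  have al: "1 - \<alpha> * \<alpha> \<noteq> 0"
  proof -
    have "(Re (a m))\<^sup>2 < 1" by (rule a_lt1)
    hence "1 - Re (a m) * Re (a m) \<noteq> 0" by (simp add: power2_eq_square)
    hence "complex_of_real (1 - Re (a m) * Re (a m)) \<noteq> 0" by (metis of_real_eq_0_iff)
    thus ?thesis unfolding ar of_real_diff of_real_mult of_real_1 .
  qed
  have aln: "cmod \<alpha> \<le> 1"
  proof -
    have "(Re (a m))\<^sup>2 < 1" by (rule a_lt1)
    hence "\<bar>Re (a m)\<bar> < 1" by (simp add: abs_square_less_1)
    thus ?thesis unfolding ar by simp
  qed
  have pBu: "poly pB u = u * poly (P m) u" for u unfolding pB_def by simp
  have bf: "bfun \<mu> (Suc m) = (\<lambda>u. (poly pB u - \<alpha> * poly pA u) / (poly pA u - \<alpha> * poly pB u))"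
  proof
    fix u
    have kn: "complex_of_real (kap (Suc m)) \<noteq> 0" using kap_pos[of "Suc m"] by simp
    have "bfun \<mu> (Suc m) u = (of_real (kap (Suc m)) * poly (P (Suc m)) u) / (of_real (kap (Suc m)) * poly (Ast (Suc m)) u)"
      unfolding bfun_def oOP_eq star_poly_smult by simp
    also have "\<dots> = poly (P (Suc m)) u / poly (Ast (Suc m)) u" using kn by simp
    also have "\<dots> = (poly pB u - \<alpha> * poly pA u) / (poly pA u - \<alpha> * poly pB u)"
      unfolding polyQ Ast_Suc pBu pA_def \<alpha>_def by simp
    finally show "bfun \<mu> (Suc m) u = (poly pB u - \<alpha> * poly pA u) / (poly pA u - \<alpha> * poly pB u)" .
  qed
  have Ff: "Ffun \<mu> (Suc m) = (\<lambda>u. (poly pA u + poly pB u) / (poly pA u - poly pB u))"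
  proof
    fix u
    have "Ffun \<mu> (Suc m) u = - (poly pB u + poly pA u) / (poly pB u - poly pA u)"
      unfolding Ffun_def poly_POP pBu pA_def by simp
    also have "\<dots> = (poly pA u + poly pB u) / (poly pA u - poly pB u)"
      by (metis add.commute divide_minus_left divide_minus_right minus_diff_eq)
    finally show "Ffun \<mu> (Suc m) u = (poly pA u + poly pB u) / (poly pA u - poly pB u)" .
  qed
  define A where "A = poly pA z"
  define B where "B = poly pB z"
  define Ap where "Ap = poly (pderiv pA) z"
  define Bp where "Bp = poly (pderiv pB) z"
  have lt: "cmod B < cmod A" unfolding A_def B_def pBu pA_def using disk[OF z] .
  have n1: "A - \<alpha> * B \<noteq> 0"
  proof
    assume "A - \<alpha> * B = 0"
    hence "cmod A = cmod \<alpha> * cmod B" by (simp add: norm_mult)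
    also have "\<dots> \<le> cmod B" using aln by (simp add: mult_left_le_one_le)
    finally show False using lt by simp
  qed
  have n2: "A - B \<noteq> 0" using lt by auto
  have n3: "A + B \<noteq> 0"
  proof
    assume "A + B = 0" hence "A = - B" by (simp add: eq_neg_iff_add_eq_0)
    thus False using lt by simp
  qed
  have dA: "((\<lambda>u. poly pA u) has_field_derivative Ap) (at z)" unfolding Ap_def by (rule poly_DERIV)
  have dB: "((\<lambda>u. poly pB u) has_field_derivative Bp) (at z)" unfolding Bp_def by (rule poly_DERIV)
  have db: "((\<lambda>u. (poly pB u - \<alpha> * poly pA u) / (poly pA u - \<alpha> * poly pB u)) has_field_derivative
     ((Bp - \<alpha>*Ap)*(A - \<alpha>*B) - (B - \<alpha>*A)*(Ap - \<alpha>*Bp))/((A - \<alpha>*B)*(A - \<alpha>*B))) (at z)"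
    using DERIV_divide[OF DERIV_diff[OF dB DERIV_cmult[OF dA]] DERIV_diff[OF dA DERIV_cmult[OF dB]]] n1
    unfolding A_def B_def by simp
  have dF: "((\<lambda>u. (poly pA u + poly pB u) / (poly pA u - poly pB u)) has_field_derivative
     ((Ap+Bp)*(A-B) - (A+B)*(Ap-Bp))/((A-B)*(A-B))) (at z)"
    using DERIV_divide[OF DERIV_add[OF dA dB] DERIV_diff[OF dA dB]] n2
    unfolding A_def B_def by simp
  have "hfun \<mu> (Suc m) z = (1 - z\<^sup>2) * (((Bp - \<alpha>*Ap)*(A - \<alpha>*B) - (B - \<alpha>*A)*(Ap - \<alpha>*Bp))/((A - \<alpha>*B)*(A - \<alpha>*B)))
           / (1 - ((B - \<alpha>*A)/(A - \<alpha>*B))\<^sup>2)"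
    unfolding hfun_def bf DERIV_imp_deriv[OF db] A_def B_def ..
  also have "\<dots> = (1 - z\<^sup>2) / 2 * (((Ap+Bp)*(A-B) - (A+B)*(Ap-Bp))/((A-B)*(A-B))) / ((A+B)/(A-B))"
    by (rule h_alg[OF n1 n2 n3 al])
  also have "\<dots> = (1 - z\<^sup>2) / 2 * deriv (Ffun \<mu> (Suc m)) z / Ffun \<mu> (Suc m) z"
    unfolding Ff DERIV_imp_deriv[OF dF] A_def B_def ..
  finally show ?thesis .
qed

end

theorem proposition1p2:
  fixes \<mu> :: "complex measure" and n :: nat
  assumes "prob_space \<mu>"
    and "sets \<mu> = sets borel"
    and "AE z in \<mu>. z \<in> sphere 0 1"
    and "distr \<mu> borel cnj = \<mu>"
    and "infinite (msupport \<mu>)"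
    and "n \<ge> 1"
  shows "let Z = {\<zeta>. poly (POP \<mu> n 1) \<zeta> = 0} in
    Z \<subseteq> sphere 0 1 \<and> card Z = n \<and>
    (\<forall>\<zeta>\<in>Z. sigma_wt \<mu> n \<zeta> \<ge> 0) \<and> (\<Sum>\<zeta>\<in>Z. sigma_wt \<mu> n \<zeta>) = 1 \<and>
    (\<forall>z\<in>ball 0 1.
       Ffun \<mu> n z = (\<Sum>\<zeta>\<in>Z. complex_of_real (sigma_wt \<mu> n \<zeta>) * ((\<zeta> + z) / (\<zeta> - z))) \<and>
       hfun \<mu> n z = (1 - z\<^sup>2) / 2 * deriv (Ffun \<mu> n) z / Ffun \<mu> n z)"
proof -
  interpret opuc \<mu> by (rule opuc.intro[OF assms(1-5)])
  obtain m where n: "n = Suc m" using assms(6) by (cases n) auto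
  have wnn: "sigma_wt \<mu> (Suc m) \<zeta> \<ge> 0" for \<zeta>
  proof -
    have "Re (Kker \<mu> (Suc m) \<zeta> \<zeta>) = KR m \<zeta>" using Kker_diag[of m \<zeta>] by simp
    thus ?thesis unfolding sigma_wt_def using KR_pos[of m \<zeta>] by simp
  qed
  show ?thesis unfolding Let_def n
    using root_circ[of m] Zcard[of m] wnn wsum[of m] F_formula[of _ m] h_formula[of _ m]
    by auto
qed


end
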